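(* In the setting described in the context (Schrödinger equation with short-range potential, bases $(g_n,\bar g_n)$ on the classically allowed intervals, transfer matrices $T_n$, and the quantum walk on $[n_0]$ with coins $U_n:=\mathcal{M}(T_n)$), the scattering matrix of the Schrödinger equation coincides with that of the quantum walk: $\mathbb{S}_{\mathrm{QM}}=\mathbb{S}_{\mathrm{QW}}$.
   Context: Schrödinger side. Let $h>0$ and $P(h)=-h^2\frac{d^2}{dx^2}+V(x)$ on $\mathbb{R}$, with $V$ continuous, real-valued, and satisfying $|V(x)|\le C(1+|x|)^{-1-\epsilon}$ for some $C,\epsilon>0$. Fix $0<\lambda_0\le\lambda_1$ and $\lambda\in[\lambda_0,\lambda_1]$. The Jost solutions $J^\pm_{\mathrm{in}},J^\pm_{\mathrm{out}}$ of $(P-\lambda)\varphi=0$ are characterized by $e^{i\sqrt\lambda|x|/h}J^\pm_{\mathrm{in}}(x)\to1$, $e^{-i\sqrt\lambda|x|/h}J^\pm_{\mathrm{out}}(x)\to1$ as $x\to\pm\infty$. The scattering matrix $\mathbb{S}_{\mathrm{QM}}$ is the $2\times2$ matrix with $(J^+_{\mathrm{in}},J^-_{\mathrm{in}})=(J^-_{\mathrm{out}},J^+_{\mathrm{out}})\,\mathbb{S}_{\mathrm{QM}}$. The set $\{x: V(x)\ge\lambda_0\}$ is a finite union of closed intervals $K_n=[x_{2n-1},x_{2n}]$, $n=1,\dots,n_0$, with $x_1<x_2<\dots<x_{2n_0}$ and $n_0\ge2$; set $I_0=(-\infty,x_1)$, $I_n=(x_{2n},x_{2n+1})$ for $1\le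 n\le n_0-1$, $I_{n_0}=(x_{2n_0},\infty)$. For each $n=0,\dots,n_0$ let $g_n$ be a solution of $(P-\lambda)g=0$ on $\mathbb{R}$ (associated with $I_n$) such that $(g_n,\bar g_n)$ is a basis of solutions, with $g_0=J^-_{\mathrm{out}}$, $g_{n_0}=J^+_{\mathrm{in}}$, the Wronskian $\mathcal{W}(g_n,\bar g_n)$ independent of $n$, and $(g_{n-1},\bar g_n)$ linearly independent for each $n$. Define $T_n$ ($1\le n\le n_0$) by $(g_{n-1},\bar g_{n-1})T_n=(g_n,\bar g_n)$; then $T_n\in\mathcal{T}:=\{T=(t_{jk})\in SL(2,\mathbb{C}): t_{11}=\overline{t_{22}},\ t_{12}=\overline{t_{21}}\}$. Define $\mathcal{M}:\mathcal{T}\to\mathcal{S}:=\{M\in U(2): m_{11}=m_{22}\neq0\}$ by $\mathcal{M}\begin{pmatrix}p&\bar q\\ q&\bar p\end{pmatrix}=\frac1{\bar p}\begin{pmatrix}1&\bar q\\-q&1\end{pmatrix}$, and $U_n:=\mathcal{M}(T_n)$. Quantum walk on $[n_0]=\{1,\dots,n_0\}$. Set $P_n:=\begin{pmatrix}1&0\\0&0\end{pmatrix}U_n$, $Q_n:=\begin{pmatrix}0&0\\0&1\end{pmatrix}U_n$. A state $\Psi$ consists of $\Psi(n)=(\Psi_1(n),\Psi_2(n))^T\in\mathbb{C}^2$ for $1\le n\le n_0$ and scalars $\Psi(-\infty),\Psi(+\infty)\in\mathbb{C}$ (so the state space is $\mathbb{C}^{2n_0+2}$). The evolution $\mathcal{U}$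 is: $(\mathcal{U}\Psi)(n)=P_{n+1}\Psi(n+1)+Q_{n-1}\Psi(n-1)$ for $2\le n\le n_0-1$; $(\mathcal{U}\Psi)(-\infty)=(1,0)U_1\Psi(1)$; $(\mathcal{U}\Psi)(+\infty)=(0,1)U_{n_0}\Psi(n_0)$; $(\mathcal{U}\Psi)(1)=P_2\Psi(2)+(0,\Psi_2(1))^T$; $(\mathcal{U}\Psi)(n_0)=(\Psi_1(n_0),0)^T+Q_{n_0-1}\Psi(n_0-1)$. Let $\Psi^\pm_{\mathrm{in}},\Psi^\pm_{\mathrm{out}}$ be the (unique) states with $\mathcal{U}\Psi=\Psi$ and: $(\Psi^-_{\mathrm{in}})_2(1)=1,\ \Psi^-_{\mathrm{in}}(-\infty)=0$; $(\Psi^-_{\mathrm{out}})_2(1)=0,\ \Psi^-_{\mathrm{out}}(-\infty)=1$; $(\Psi^+_{\mathrm{in}})_1(n_0)=1,\ \Psi^+_{\mathrm{in}}(+\infty)=0$; $(\Psi^+_{\mathrm{out}})_1(n_0)=0,\ \Psi^+_{\mathrm{out}}(+\infty)=1$. The scattering matrix $\mathbb{S}_{\mathrm{QW}}$ is the $2\times2$ matrix with $(\Psi^+_{\mathrm{in}},\Psi^-_{\mathrm{in}})=(\Psi^-_{\mathrm{out}},\Psi^+_{\mathrm{out}})\,\mathbb{S}_{\mathrm{QW}}$. *)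

theory Defs
  imports "HOL-Analysis.Analysis"
begin

definition cnj_fun :: "(real \<Rightarrow> complex) \<Rightarrow> real \<Rightarrow> complex" where
  "cnj_fun f = (\<lambda>x. cnj (f x))"

text \<open>phi solves (P(h) - lam) phi = 0, i.e. -h^2 phi'' + V phi = lam phi on R.\<close>
definition is_sol :: "real \<Rightarrow> (real \<Rightarrow> real) \<Rightarrow> real \<Rightarrow> (real \<Rightarrow> complex) \<Rightarrow> bool" where
  "is_sol h V lam \<phi> \<longleftrightarrow>
     (\<exists>\<phi>'. \<forall>x. (\<phi> has_vector_derivative \<phi>' x) (at x) \<and>
        (\<phi>' has_vector_derivative (complex_of_real ((V x - lam) / h\<^sup>2) * \<phi> x)) (at x))"

definition sol_basis :: "real \<Rightarrow> (real \<Rightarrow> real) \<Rightarrow> real \<Rightarrow> (real \<Rightarrow> complex) \<Rightarrow> (real \<Rightarrow> complex) \<Rightarrow> bool" where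
  "sol_basis h V lam f g \<longleftrightarrow> is_sol h V lam f \<and> is_sol h V lam g \<and>
     (\<forall>y. is_sol h V lam y \<longrightarrow> (\<exists>!ab. y = (\<lambda>x. fst ab * f x + snd ab * g x)))"

definition lin_indep2 :: "(real \<Rightarrow> complex) \<Rightarrow> (real \<Rightarrow> complex) \<Rightarrow> bool" where
  "lin_indep2 f g \<longleftrightarrow> (\<forall>a b. (\<forall>x. a * f x + b * g x = 0) \<longrightarrow> a = 0 \<and> b = 0)"

definition wronskian :: "(real \<Rightarrow> complex) \<Rightarrow> (real \<Rightarrow> complex) \<Rightarrow> real \<Rightarrow> complex" where
  "wronskian f g x = f x * vector_derivative g (at x) - vector_derivative f (at x) * g x"

definition jost_in_plus :: "real \<Rightarrow> real \<Rightarrow> (real \<Rightarrow> complex) \<Rightarrow> bool" where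
  "jost_in_plus h lam J \<longleftrightarrow>
     ((\<lambda>x. exp (\<i> * complex_of_real (sqrt lam * \<bar>x\<bar> / h)) * J x) \<longlongrightarrow> 1) at_top"
definition jost_in_minus :: "real \<Rightarrow> real \<Rightarrow> (real \<Rightarrow> complex) \<Rightarrow> bool" where
  "jost_in_minus h lam J \<longleftrightarrow>
     ((\<lambda>x. exp (\<i> * complex_of_real (sqrt lam * \<bar>x\<bar> / h)) * J x) \<longlongrightarrow> 1) at_bot"
definition jost_out_plus :: "real \<Rightarrow> real \<Rightarrow> (real \<Rightarrow> complex) \<Rightarrow> bool" where
  "jost_out_plus h lam J \<longleftrightarrow>
     ((\<lambda>x. exp (- \<i> * complex_of_real (sqrt lam * \<bar>x\<bar> / h)) * J x) \<longlongrightarrow> 1) at_top"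
definition jost_out_minus :: "real \<Rightarrow> real \<Rightarrow> (real \<Rightarrow> complex) \<Rightarrow> bool" where
  "jost_out_minus h lam J \<longleftrightarrow>
     ((\<lambda>x. exp (- \<i> * complex_of_real (sqrt lam * \<bar>x\<bar> / h)) * J x) \<longlongrightarrow> 1) at_bot"

definition scat_QM :: "(real \<Rightarrow> complex) \<Rightarrow> (real \<Rightarrow> complex) \<Rightarrow> (real \<Rightarrow> complex) \<Rightarrow> (real \<Rightarrow> complex)
    \<Rightarrow> complex^2^2" where
  "scat_QM Jpin Jmin Jmout Jpout = (THE S::complex^2^2. \<forall>x.
     Jpin x = Jmout x * S$1$1 + Jpout x * S$2$1 \<and>
     Jmin x = Jmout x * S$1$2 + Jpout x * S$2$2)"

definition transfer_rel :: "(real \<Rightarrow> complex) \<Rightarrow> (real \<Rightarrow> complex) \<Rightarrow> complex^2^2 \<Rightarrow> bool" where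
  "transfer_rel gp gn T \<longleftrightarrow> (\<forall>x.
     gn x = gp x * T$1$1 + cnj (gp x) * T$2$1 \<and>
     cnj (gn x) = gp x * T$1$2 + cnj (gp x) * T$2$2)"

text \<open>The map M: [[p, conj q],[q, conj p]] to (1/conj p) [[1, conj q],[-q, 1]].\<close>
definition coinM :: "complex^2^2 \<Rightarrow> complex^2^2" where
  "coinM T = (let p = T$1$1; q = T$2$1 in
     (\<chi> i j. (1 / cnj p) *
        (if i = 1 \<and> j = 1 then 1 else if i = 1 \<and> j = 2 then cnj q
         else if i = 2 \<and> j = 1 then - q else 1)))"

definition projP :: "complex^2^2" where
  "projP = (\<chi> i j. if i = 1 \<and> j = 1 then 1 else 0)"
definition projQ :: "complex^2^2" where
  "projQ = (\<chi> i j. if i = 2 \<and> j = 2 then 1 else 0)"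

text \<open>Quantum walk states: cells Psi n for 1 <= n <= n0 (other indices are ignored),
  and the two scalars Psi(-infinity), Psi(+infinity).\<close>
record qw_state =
  cells :: "nat \<Rightarrow> complex^2"
  mInf :: complex
  pInf :: complex

definition vec2 :: "complex \<Rightarrow> complex \<Rightarrow> complex^2" where
  "vec2 a b = (\<chi> i. if i = 1 then a else b)"

definition qw_step :: "nat \<Rightarrow> (nat \<Rightarrow> complex^2^2) \<Rightarrow> qw_state \<Rightarrow> qw_state" where
  "qw_step n0 U \<Psi> = \<lparr>
     cells = (\<lambda>n.
       if n = 1 then (projP ** U 2) *v cells \<Psi> 2 + vec2 0 (cells \<Psi> 1 $ 2)
       else if n = n0 then vec2 (cells \<Psi> n0 $ 1) 0 + (projQ ** U (n0 - 1)) *v cells \<Psi> (n0 - 1)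
       else if 2 \<le> n \<and> n \<le> n0 - 1 then
         (projP ** U (n + 1)) *v cells \<Psi> (n + 1) + (projQ ** U (n - 1)) *v cells \<Psi> (n - 1)
       else 0),
     mInf = (U 1 *v cells \<Psi> 1) $ 1,
     pInf = (U n0 *v cells \<Psi> n0) $ 2 \<rparr>"

definition qw_fixed :: "nat \<Rightarrow> (nat \<Rightarrow> complex^2^2) \<Rightarrow> qw_state \<Rightarrow> bool" where
  "qw_fixed n0 U \<Psi> \<longleftrightarrow>
     (\<forall>n\<in>{1..n0}. cells (qw_step n0 U \<Psi>) n = cells \<Psi> n) \<and>
     mInf (qw_step n0 U \<Psi>) = mInf \<Psi> \<and> pInf (qw_step n0 U \<Psi>) = pInf \<Psi>"

definition scat_QW :: "nat \<Rightarrow> qw_state \<Rightarrow> qw_state \<Rightarrow> qw_state \<Rightarrow> qw_state \<Rightarrow> complex^2^2" where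
  "scat_QW n0 Ppin Pmin Pmout Ppout = (THE S::complex^2^2.
     (\<forall>n\<in>{1..n0}.
        cells Ppin n = S$1$1 *s cells Pmout n + S$2$1 *s cells Ppout n \<and>
        cells Pmin n = S$1$2 *s cells Pmout n + S$2$2 *s cells Ppout n) \<and>
     mInf Ppin = S$1$1 * mInf Pmout + S$2$1 * mInf Ppout \<and>
     mInf Pmin = S$1$2 * mInf Pmout + S$2$2 * mInf Ppout \<and>
     pInf Ppin = S$1$1 * pInf Pmout + S$2$1 * pInf Ppout \<and>
     pInf Pmin = S$1$2 * pInf Pmout + S$2$2 * pInf Ppout)"

end

theory Submission
  imports Defs
begin
lemma nonconv_top:
  fixes w :: real
  assumes "w \<noteq> 0"
  shows "\<not> ((\<lambda>x. exp (\<i> * complex_of_real (w * \<bar>x\<bar>))) \<longlongrightarrow> L) at_top"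
proof
  assume L: "((\<lambda>x. exp (\<i> * complex_of_real (w * \<bar>x\<bar>))) \<longlongrightarrow> L) at_top"
  define d where "d = pi / \<bar>w\<bar>"
  have dpos: "d > 0" using assms by (simp add: d_def)
  have sh: "filterlim (\<lambda>x. x + d) at_top at_top"
    using filterlim_tendsto_add_at_top[OF tendsto_const[of d at_top] filterlim_ident] by (simp add: add.commute)
  have L2: "((\<lambda>x. exp (\<i> * complex_of_real (w * \<bar>x + d\<bar>))) \<longlongrightarrow> L) at_top"
    using filterlim_compose[OF L sh] by (simp add: o_def)
  have ev: "eventually (\<lambda>x. exp (\<i> * complex_of_real (w * \<bar>x + d\<bar>)) = - exp (\<i> * complex_of_real (w * \<bar>x\<bar>))) at_top"
    using eventually_ge_at_top[of 0]
  proof eventually_elim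
    case (elim x)
    have "w * \<bar>x + d\<bar> = w * \<bar>x\<bar> + w * d" using elim dpos by (simp add: distrib_left)
    moreover have "w * d = pi \<or> w * d = - pi" using assms by (auto simp: d_def abs_if)
    ultimately show ?case
    proof (elim disjE)
      assume "w * \<bar>x + d\<bar> = w * \<bar>x\<bar> + w * d" "w * d = pi"
      then have "\<i> * complex_of_real (w * \<bar>x + d\<bar>) = \<i> * complex_of_real (w * \<bar>x\<bar>) + pi * \<i>"
        by (simp add: algebra_simps)
      then show ?thesis by (simp add: exp_add)
    next
      assume "w * \<bar>x + d\<bar> = w * \<bar>x\<bar> + w * d" "w * d = - pi"
      then have "w * \<bar>x + d\<bar> = w * \<bar>x\<bar> - pi" by simp
      then have "complex_of_real (w * \<bar>x + d\<bar>) = complex_of_real (w * \<bar>x\<bar>) - complex_of_real pi"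
        by simp
      then have "\<i> * complex_of_real (w * \<bar>x + d\<bar>) = \<i> * complex_of_real (w * \<bar>x\<bar>) - \<i> * complex_of_real pi"
        by (simp only: right_diff_distrib)
      then show ?thesis by (simp add: exp_diff mult.commute)
    qed
  qed
  have "((\<lambda>x. - exp (\<i> * complex_of_real (w * \<bar>x\<bar>))) \<longlongrightarrow> L) at_top"
    using tendsto_cong[OF ev] L2 by simp
  hence "((\<lambda>x. exp (\<i> * complex_of_real (w * \<bar>x\<bar>))) \<longlongrightarrow> -L) at_top"
    using tendsto_minus by fastforce
  hence "L = -L" using L tendsto_unique by (metis trivial_limit_at_top_linorder)
  hence L0: "L = 0" by simp
  have "((\<lambda>x. norm (exp (\<i> * complex_of_real (w * \<bar>x\<bar>)))) \<longlongrightarrow> norm L) at_top"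
    using L tendsto_norm by blast
  moreover have "(\<lambda>x. norm (exp (\<i> * complex_of_real (w * \<bar>x\<bar>)))) = (\<lambda>x. 1)"
    by (simp add: norm_exp_i_times)
  ultimately have "norm L = 1"
    using tendsto_unique by (metis tendsto_const trivial_limit_at_top_linorder)
  with L0 show False by simp
qed
lemma nonconv_bot:
  fixes w :: real
  assumes "w \<noteq> 0"
  shows "\<not> ((\<lambda>x. exp (\<i> * complex_of_real (w * \<bar>x\<bar>))) \<longlongrightarrow> L) at_bot"
  using nonconv_top[OF assms, of L] unfolding filterlim_at_bot_mirror by simp

lemma asym_basis:
  fixes E J K :: "real \<Rightarrow> complex" and F :: "real filter"
  assumes F: "F \<noteq> bot"
    and EJ: "((\<lambda>x. E x * J x) \<longlongrightarrow> 1) F"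
    and EK: "((\<lambda>x. cnj (E x) * K x) \<longlongrightarrow> 1) F"
    and K: "\<And>x. K x = a * J x + b * cnj (J x)"
    and E1: "\<And>x. E x * cnj (E x) = 1"
    and NC: "\<And>L. \<not> ((\<lambda>x. cnj (E x) ^ 2) \<longlongrightarrow> L) F"
  shows "a = 0 \<and> b = 1"
proof -
  define v where "v = (\<lambda>x. E x * J x)"
  have v: "(v \<longlongrightarrow> 1) F" using EJ by (simp add: v_def)
  have cv: "((\<lambda>x. cnj (v x)) \<longlongrightarrow> 1) F" using tendsto_cnj[OF v] by simp
  have eq: "cnj (E x) * K x = a * (cnj (E x) ^ 2 * v x) + b * cnj (v x)" for x
  proof -
    have "cnj (E x) * J x = cnj (E x) ^ 2 * v x"
      using E1[of x] by (simp add: v_def power2_eq_square algebra_simps)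
    then show ?thesis by (simp add: K v_def algebra_simps)
  qed
  have lim1: "((\<lambda>x. a * (cnj (E x) ^ 2 * v x)) \<longlongrightarrow> 1 - b) F"
  proof -
    have "((\<lambda>x. cnj (E x) * K x - b * cnj (v x)) \<longlongrightarrow> 1 - b * 1) F"
      by (intro tendsto_intros EK cv)
    then show ?thesis by (simp add: eq)
  qed
  have a0: "a = 0"
  proof (rule ccontr)
    assume an: "a \<noteq> 0"
    have evn: "eventually (\<lambda>x. v x \<noteq> 0) F"
      using tendsto_imp_eventually_ne[OF v, of 0] by simp
    have "((\<lambda>x. a * (cnj (E x) ^ 2 * v x) / (a * v x)) \<longlongrightarrow> (1 - b) / (a * 1)) F"
      using an by (intro tendsto_intros lim1 v) simp
    moreover have "eventually (\<lambda>x. a * (cnj (E x) ^ 2 * v x) / (a * v x) = cnj (E x) ^ 2) F"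
      using evn by eventually_elim (use an in simp)
    ultimately have "((\<lambda>x. cnj (E x) ^ 2) \<longlongrightarrow> (1 - b) / (a * 1)) F"
      by (rule Lim_transform_eventually)
    with NC show False by blast
  qed
  have "((\<lambda>x. b * cnj (v x)) \<longlongrightarrow> 1) F" using EK by (simp add: eq a0)
  moreover have "((\<lambda>x. b * cnj (v x)) \<longlongrightarrow> b * 1) F" by (intro tendsto_intros cv)
  ultimately have "b * 1 = 1" using tendsto_unique[OF F] by blast
  then have "b = 1" by simp
  with a0 show ?thesis by simp
qed


lemma wronsk_nonzero:
  fixes E f f' :: "real \<Rightarrow> complex"
  assumes D: "\<And>x. (f has_vector_derivative f' x) (at x)"
    and Ef: "((\<lambda>x. E x * f x) \<longlongrightarrow> 1) at_bot"
    and E1: "\<And>x. E x * cnj (E x) = 1"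
    and NC: "\<And>L. \<not> ((\<lambda>x. cnj (E x) ^ 2) \<longlongrightarrow> L) at_bot"
  shows "\<exists>x. f x * cnj (f' x) - f' x * cnj (f x) \<noteq> 0"
proof (rule ccontr)
  assume "\<not> ?thesis"
  hence W: "\<And>x. f x * cnj (f' x) = f' x * cnj (f x)" by auto
  have "eventually (\<lambda>x. E x * f x \<noteq> 0) at_bot"
    using tendsto_imp_eventually_ne[OF Ef, of 0] by simp
  then obtain a where a: "\<And>x. x \<le> a \<Longrightarrow> E x * f x \<noteq> 0"
    unfolding eventually_at_bot_linorder by blast
  have fnz: "x < a \<Longrightarrow> f x \<noteq> 0" for x using a[of x] by auto
  have "\<exists>c. \<forall>x\<in>{..<a}. f x / cnj (f x) = c"
  proof (rule has_derivative_zero_constant)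
    show "convex {..<a}" by simp
  next
    fix x assume x: "x \<in> {..<a}"
    have d1: "(f has_derivative (\<lambda>h. h *\<^sub>R f' x)) (at x within {..<a})"
      using D[of x] unfolding has_vector_derivative_def by (rule has_derivative_at_withinI)
    have d2: "((\<lambda>x. cnj (f x)) has_derivative (\<lambda>h. h *\<^sub>R cnj (f' x))) (at x within {..<a})"
      using has_vector_derivative_cnj[OF D[of x]] unfolding has_vector_derivative_def
      by (rule has_derivative_at_withinI)
    have nz: "cnj (f x) \<noteq> 0" using fnz x by simp
    have "((\<lambda>x. f x / cnj (f x)) has_derivative
        (\<lambda>h. (h *\<^sub>R f' x * cnj (f x) - f x * h *\<^sub>R cnj (f' x)) / (cnj (f x) * cnj (f x))))
        (at x within {..<a})"
      by (rule has_derivative_divide'[OF d1 d2 nz])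
    moreover have "(\<lambda>h. (h *\<^sub>R f' x * cnj (f x) - f x * h *\<^sub>R cnj (f' x)) / (cnj (f x) * cnj (f x))) = (\<lambda>h. 0)"
    proof
      fix h :: real
      have "h *\<^sub>R f' x * cnj (f x) - f x * h *\<^sub>R cnj (f' x) = of_real h * (f' x * cnj (f x) - f x * cnj (f' x))"
        by (simp add: scaleR_conv_of_real algebra_simps)
      also have "\<dots> = 0" using W[of x] by simp
      finally show "(h *\<^sub>R f' x * cnj (f x) - f x * h *\<^sub>R cnj (f' x)) / (cnj (f x) * cnj (f x)) = 0" by simp
    qed
    ultimately show "((\<lambda>x. f x / cnj (f x)) has_derivative (\<lambda>h. 0)) (at x within {..<a})" by simp
  qed
  then obtain c where c: "\<And>x. x < a \<Longrightarrow> f x / cnj (f x) = c" by auto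
  define v where "v = (\<lambda>x. E x * f x)"
  have v: "(v \<longlongrightarrow> 1) at_bot" using Ef by (simp add: v_def)
  have "((\<lambda>x. c * cnj (v x) / v x) \<longlongrightarrow> c * cnj 1 / 1) at_bot"
    by (intro tendsto_intros v) simp
  moreover have "eventually (\<lambda>x. c * cnj (v x) / v x = cnj (E x) ^ 2) at_bot"
    unfolding eventually_at_bot_linorder
  proof (intro exI allI impI)
    fix x assume x: "x \<le> a - 1"
    hence xa: "x < a" by simp
    have vn: "v x \<noteq> 0" using a[of x] x by (simp add: v_def)
    have fn: "f x \<noteq> 0" using fnz xa .
    have En: "E x \<noteq> 0" using E1[of x] by auto
    have "c * cnj (v x) / v x = f x / cnj (f x) * (cnj (E x) * cnj (f x)) / (E x * f x)"
      using c[OF xa] by (simp add: v_def)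
    also have "\<dots> = cnj (E x) / E x" using fn by (simp add: field_simps)
    also have "\<dots> = cnj (E x) ^ 2"
      using E1[of x] En by (simp add: field_simps power2_eq_square)
    finally show "c * cnj (v x) / v x = cnj (E x) ^ 2" .
  qed
  ultimately have "((\<lambda>x. cnj (E x) ^ 2) \<longlongrightarrow> c * cnj 1 / 1) at_bot"
    by (rule Lim_transform_eventually)
  with NC show False by blast
qed


definition chainT :: "nat \<Rightarrow> (nat \<Rightarrow> complex) \<Rightarrow> (nat \<Rightarrow> complex) \<Rightarrow> (nat \<Rightarrow> complex) \<Rightarrow> (nat \<Rightarrow> complex) \<Rightarrow> bool" where
  "chainT n0 p q a b \<longleftrightarrow> (\<forall>n\<in>{1..n0}. a (n - 1) = p n * a n + cnj (q n) * b n \<and>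
      b (n - 1) = q n * a n + cnj (p n) * b n)"

lemma chain_zero:
  assumes ch: "chainT n0 p q a b" and det: "\<forall>n\<in>{1..n0}. p n * cnj (p n) - q n * cnj (q n) = 1"
    and a0: "a 0 = 0" and b0: "b 0 = 0"
  shows "n \<le> n0 \<Longrightarrow> a n = 0 \<and> b n = 0"
proof (induction n)
  case 0 then show ?case using a0 b0 by simp
next
  case (Suc m)
  then have IH: "a m = 0" "b m = 0" by auto
  have r: "a m = p (Suc m) * a (Suc m) + cnj (q (Suc m)) * b (Suc m)"
          "b m = q (Suc m) * a (Suc m) + cnj (p (Suc m)) * b (Suc m)"
    using ch Suc.prems unfolding chainT_def by (auto dest: bspec[of _ _ "Suc m"])
  have d: "p (Suc m) * cnj (p (Suc m)) - q (Suc m) * cnj (q (Suc m)) = 1" using det Suc.prems by auto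
  have "a (Suc m) = cnj (p (Suc m)) * a m - cnj (q (Suc m)) * b m"
    using d by (simp add: r algebra_simps)
  moreover have "b (Suc m) = p (Suc m) * b m - q (Suc m) * a m"
    using d by (simp add: r algebra_simps)
  ultimately show ?case using IH by simp
qed

lemma chain_inv:
  assumes ch: "chainT n0 p q a b" and det: "\<forall>n\<in>{1..n0}. p n * cnj (p n) - q n * cnj (q n) = 1"
  shows "n \<le> n0 \<Longrightarrow> a 0 * cnj (a 0) - b 0 * cnj (b 0) = a n * cnj (a n) - b n * cnj (b n)"
proof (induction n)
  case 0 then show ?case by simp
next
  case (Suc m)
  let ?p = "p (Suc m)" and ?q = "q (Suc m)" and ?a = "a (Suc m)" and ?b = "b (Suc m)"
  have r: "a m = ?p * ?a + cnj ?q * ?b" "b m = ?q * ?a + cnj ?p * ?b"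
    using ch Suc.prems unfolding chainT_def by (auto dest: bspec[of _ _ "Suc m"])
  have d: "?p * cnj ?p - ?q * cnj ?q = 1" using det Suc.prems by auto
  have "a m * cnj (a m) - b m * cnj (b m) = (?p * cnj ?p - ?q * cnj ?q) * (?a * cnj ?a - ?b * cnj ?b)"
    unfolding r by (simp add: algebra_simps)
  then have "a m * cnj (a m) - b m * cnj (b m) = ?a * cnj ?a - ?b * cnj ?b" using d by simp
  then show ?case using Suc by simp
qed

lemma chain_lin:
  assumes "chainT n0 p q a1 b1" "chainT n0 p q a2 b2" "chainT n0 p q a3 b3"
  shows "chainT n0 p q (\<lambda>n. a1 n - x * a2 n - y * a3 n) (\<lambda>n. b1 n - x * b2 n - y * b3 n)"
  using assms unfolding chainT_def by (auto simp: algebra_simps complex_cnj_mult)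


lemma chain_fun:
  fixes g :: "nat \<Rightarrow> real \<Rightarrow> complex"
  assumes ch: "chainT n0 p q a b"
    and tr: "\<forall>n\<in>{1..n0}. \<forall>x. g n x = g (n - 1) x * p n + cnj (g (n - 1) x) * q n \<and>
                cnj (g n x) = g (n - 1) x * cnj (q n) + cnj (g (n - 1) x) * cnj (p n)"
  shows "n \<le> n0 \<Longrightarrow> a 0 * g 0 x + b 0 * cnj (g 0 x) = a n * g n x + b n * cnj (g n x)"
proof (induction n)
  case 0 then show ?case by simp
next
  case (Suc m)
  have r: "a m = p (Suc m) * a (Suc m) + cnj (q (Suc m)) * b (Suc m)"
          "b m = q (Suc m) * a (Suc m) + cnj (p (Suc m)) * b (Suc m)"
    using ch Suc.prems unfolding chainT_def by (auto dest: bspec[of _ _ "Suc m"])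
  have t: "g (Suc m) x = g m x * p (Suc m) + cnj (g m x) * q (Suc m)"
     "cnj (g (Suc m) x) = g m x * cnj (q (Suc m)) + cnj (g m x) * cnj (p (Suc m))"
    using tr Suc.prems by (auto dest: bspec[of _ _ "Suc m"])
  have "a m * g m x + b m * cnj (g m x) = a (Suc m) * g (Suc m) x + b (Suc m) * cnj (g (Suc m) x)"
    unfolding t r by (simp add: algebra_simps)
  then show ?case using Suc by simp
qed

lemma wr_transfer:
  fixes f G :: "real \<Rightarrow> complex"
  assumes D: "(f has_vector_derivative f') (at x)"
    and G: "G = (\<lambda>y. f y * a + cnj (f y) * b)"
  shows "wronskian G (cnj_fun G) x = (a * cnj a - b * cnj b) * wronskian f (cnj_fun f) x"
proof -
  have ml: "((\<lambda>y. u y * c) has_vector_derivative u' * c) (at x)"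
    if "(u has_vector_derivative u') (at x)" for u :: "real \<Rightarrow> complex" and u' c
    using has_derivative_mult_left[OF that[unfolded has_vector_derivative_def], of c]
    unfolding has_vector_derivative_def by (simp add: scaleR_conv_of_real algebra_simps)
  have Dc0: "((\<lambda>y. cnj (f y)) has_vector_derivative cnj f') (at x)"
    by (rule has_vector_derivative_cnj[OF D])
  have DG: "(G has_vector_derivative (f' * a + cnj f' * b)) (at x)"
    unfolding G by (intro has_vector_derivative_add ml D Dc0)
  have DGc: "(cnj_fun G has_vector_derivative cnj (f' * a + cnj f' * b)) (at x)"
    unfolding cnj_fun_def by (rule has_vector_derivative_cnj[OF DG])
  have Dc: "(cnj_fun f has_vector_derivative cnj f') (at x)"
    unfolding cnj_fun_def by (rule has_vector_derivative_cnj[OF D])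
  show ?thesis
    unfolding wronskian_def vector_derivative_at[OF DG] vector_derivative_at[OF DGc]
      vector_derivative_at[OF D] vector_derivative_at[OF Dc]
    by (simp add: G cnj_fun_def algebra_simps)
qed


lemma coin_mv1: "(coinM T *v v) $ 1 = (v $ 1 + cnj (T$2$1) * v $ 2) / cnj (T$1$1)"
  by (simp add: coinM_def Let_def matrix_vector_mult_def sum_2 add_divide_distrib diff_divide_distrib algebra_simps)
lemma coin_mv2: "(coinM T *v v) $ 2 = (- (T$2$1) * v $ 1 + v $ 2) / cnj (T$1$1)"
  by (simp add: coinM_def Let_def matrix_vector_mult_def sum_2 add_divide_distrib diff_divide_distrib algebra_simps)
lemma projP_mv: "((projP ** M) *v v) $ 1 = (M *v v) $ 1" "((projP ** M) *v v) $ 2 = 0"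
  by (simp_all add: projP_def matrix_vector_mult_def matrix_matrix_mult_def sum_2)
lemma projQ_mv: "((projQ ** M) *v v) $ 1 = 0" "((projQ ** M) *v v) $ 2 = (M *v v) $ 2"
  by (simp_all add: projQ_def matrix_vector_mult_def matrix_matrix_mult_def sum_2)
lemma vec2_nth: "vec2 a b $ 1 = a" "vec2 a b $ 2 = b"
  by (simp_all add: vec2_def)

lemma state_chain:
  fixes T :: "nat \<Rightarrow> complex^2^2"
  assumes fx: "qw_fixed n0 (\<lambda>n. coinM (T n)) \<Psi>" and n0: "n0 \<ge> 2"
    and det: "\<forall>n\<in>{1..n0}. T n$1$1 * cnj (T n$1$1) - T n$2$1 * cnj (T n$2$1) = 1"
  shows "chainT n0 (\<lambda>n. T n$1$1) (\<lambda>n. T n$2$1)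
     (\<lambda>n. if n = 0 then mInf \<Psi> else cells \<Psi> n $ 1)
     (\<lambda>n. if n = n0 then pInf \<Psi> else cells \<Psi> (Suc n) $ 2)"
proof -
  let ?U = "\<lambda>n. coinM (T n)"
  have cf: "\<And>n. n \<in> {1..n0} \<Longrightarrow> cells (qw_step n0 ?U \<Psi>) n = cells \<Psi> n"
   and mI: "mInf \<Psi> = (?U 1 *v cells \<Psi> 1) $ 1" and pI: "pInf \<Psi> = (?U n0 *v cells \<Psi> n0) $ 2"
    using fx unfolding qw_fixed_def qw_step_def by auto
  have F1: "cells \<Psi> n $ 1 = (?U (Suc n) *v cells \<Psi> (Suc n)) $ 1" if "1 \<le> n" "n \<le> n0 - 1" for n
  proof -
    have "cells \<Psi> n $ 1 = cells (qw_step n0 ?U \<Psi>) n $ 1" using cf[of n] that by auto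
    also have "\<dots> = (?U (Suc n) *v cells \<Psi> (Suc n)) $ 1"
    proof (cases "n = 1")
      case True then show ?thesis by (simp add: qw_step_def projP_mv projQ_mv vec2_nth numeral_2_eq_2)
    next
      case False
      then have "n \<noteq> 1" "n \<noteq> n0" "2 \<le> n \<and> n \<le> n0 - 1" using that by auto
      then show ?thesis by (simp add: qw_step_def projP_mv projQ_mv vec2_nth)
    qed
    finally show ?thesis .
  qed
  have F2: "cells \<Psi> (Suc n) $ 2 = (?U n *v cells \<Psi> n) $ 2" if "1 \<le> n" "n \<le> n0 - 1" for n
  proof -
    have "cells \<Psi> (Suc n) $ 2 = cells (qw_step n0 ?U \<Psi>) (Suc n) $ 2" using cf[of "Suc n"] that by auto
    also have "\<dots> = (?U n *v cells \<Psi> n) $ 2"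
    proof (cases "Suc n = n0")
      case True
      then have "Suc n \<noteq> 1" "n = n0 - 1" using that by auto
      then show ?thesis using True by (simp add: qw_step_def projP_mv projQ_mv vec2_nth)
    next
      case False
      then have "Suc n \<noteq> 1" "Suc n \<noteq> n0" "2 \<le> Suc n \<and> Suc n \<le> n0 - 1" using that by auto
      then show ?thesis by (simp add: qw_step_def projP_mv projQ_mv vec2_nth)
    qed
    finally show ?thesis .
  qed
  show ?thesis unfolding chainT_def
  proof
    fix n assume n: "n \<in> {1..n0}"
    define a where "a = (\<lambda>n. if n = 0 then mInf \<Psi> else cells \<Psi> n $ 1)"
    define b where "b = (\<lambda>n. if n = n0 then pInf \<Psi> else cells \<Psi> (Suc n) $ 2)"
    let ?p = "T n$1$1" and ?q = "T n$2$1"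
    have d: "?p * cnj ?p - ?q * cnj ?q = 1" using det n by auto
    have pn: "cnj ?p \<noteq> 0"
    proof
      assume "cnj ?p = 0"
      then have "- (?q * cnj ?q) = 1" using d by simp
      then have "Re (- (?q * cnj ?q)) = 1" by simp
      then have "- ((Re ?q)^2 + (Im ?q)^2) = 1" by (simp add: power2_eq_square)
      then show False by (smt (verit) zero_le_power2)
    qed
    have ca: "cells \<Psi> n $ 1 = a n" using n by (simp add: a_def)
    have nn: "n - 1 \<noteq> n0" "Suc (n - 1) = n" using n by auto
    have cb: "cells \<Psi> n $ 2 = b (n - 1)" using nn by (simp add: b_def)
    have U1: "(?U n *v cells \<Psi> n) $ 1 = a (n - 1)"
    proof (cases "n = 1")
      case True then show ?thesis using mI by (simp add: a_def)
    next
      case False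
      then have "1 \<le> n - 1" "n - 1 \<le> n0 - 1" "n - 1 \<noteq> 0" "Suc (n - 1) = n" using n by auto
      then show ?thesis using F1[of "n - 1"] by (simp add: a_def)
    qed
    have U2: "(?U n *v cells \<Psi> n) $ 2 = b n"
    proof (cases "n = n0")
      case True then show ?thesis using pI by (simp add: b_def)
    next
      case False
      then have "1 \<le> n" "n \<le> n0 - 1" using n by auto
      then show ?thesis using F2[of n] False by (simp add: b_def)
    qed
    have e1: "a (n - 1) = (a n + cnj ?q * b (n - 1)) / cnj ?p"
      using U1 coin_mv1[of "T n" "cells \<Psi> n"] ca cb by simp
    have e2: "b n = (- ?q * a n + b (n - 1)) / cnj ?p"
      using U2 coin_mv2[of "T n" "cells \<Psi> n"] ca cb by simp
    have r2: "b (n - 1) = ?q * a n + cnj ?p * b n"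
      using e2 pn by (simp add: field_simps)
    have "a (n - 1) * cnj ?p = a n + cnj ?q * (?q * a n + cnj ?p * b n)"
      using e1 pn r2 by (simp add: field_simps)
    also have "\<dots> = (1 + ?q * cnj ?q) * a n + cnj ?q * cnj ?p * b n" by (simp add: algebra_simps)
    also have "\<dots> = (?p * a n + cnj ?q * b n) * cnj ?p" using d by (simp add: algebra_simps)
    finally have r1: "a (n - 1) = ?p * a n + cnj ?q * b n" using pn by simp
    show "a (n - 1) = ?p * a n + cnj ?q * b n \<and> b (n - 1) = ?q * a n + cnj ?p * b n"
      using r1 r2 by simp
  qed
qed


lemma basis_indep:
  assumes "sol_basis h V lam f g" and "\<forall>x. a * f x + b * g x = 0"
  shows "a = 0 \<and> b = 0"
proof -
  have z: "is_sol h V lam (\<lambda>x. 0)"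
    unfolding is_sol_def by (rule exI[of _ "\<lambda>x. 0"]) (simp add: has_vector_derivative_const)
  have "\<exists>!ab. (\<lambda>x. 0) = (\<lambda>x. fst ab * f x + snd ab * g x)"
    using assms(1) z unfolding sol_basis_def by blast
  then obtain ab where "\<forall>ab'. (\<lambda>x. 0) = (\<lambda>x. fst ab' * f x + snd ab' * g x) \<longrightarrow> ab' = ab"
    by (elim ex1E) blast
  then have "(0, 0) = ab" "(a, b) = ab" using assms(2) by (auto simp: fun_eq_iff)
  then have "(a, b) = (0, 0)" by simp
  then show ?thesis by simp
qed

lemma basis_repr:
  assumes "sol_basis h V lam f g" and "is_sol h V lam y"
  obtains a b where "\<And>x. y x = a * f x + b * g x"
proof -
  have "\<exists>!ab. y = (\<lambda>x. fst ab * f x + snd ab * g x)"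
    using assms unfolding sol_basis_def by blast
  then obtain ab where "y = (\<lambda>x. fst ab * f x + snd ab * g x)" by (elim ex1E) blast
  then show ?thesis using that[of "fst ab" "snd ab"] by simp
qed

theorem mainTheorem3:
  fixes h lam lam0 lam1 C eps :: real
    and V :: "real \<Rightarrow> real"
    and n0 :: nat
    and xs :: "nat \<Rightarrow> real"
    and Jpin Jmin Jpout Jmout :: "real \<Rightarrow> complex"
    and g :: "nat \<Rightarrow> real \<Rightarrow> complex"
    and T :: "nat \<Rightarrow> complex^2^2"
    and Ppin Pmin Ppout Pmout :: qw_state
  assumes h_pos: "h > 0"
    and V_cont: "continuous_on UNIV V"
    and C_pos: "C > 0" and eps_pos: "eps > 0"
    and V_decay: "\<forall>x. \<bar>V x\<bar> \<le> C * (1 + \<bar>x\<bar>) powr (- 1 - eps)"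
    and lam_range: "0 < lam0" "lam0 \<le> lam1" "lam0 \<le> lam" "lam \<le> lam1"
    and J_pin: "is_sol h V lam Jpin" "jost_in_plus h lam Jpin"
    and J_min: "is_sol h V lam Jmin" "jost_in_minus h lam Jmin"
    and J_pout: "is_sol h V lam Jpout" "jost_out_plus h lam Jpout"
    and J_mout: "is_sol h V lam Jmout" "jost_out_minus h lam Jmout"
    and n0_ge: "n0 \<ge> 2"
    and xs_mono: "strict_mono_on {1..2 * n0} xs"
    and wells: "{x. lam0 \<le> V x} = (\<Union>n\<in>{1..n0}. {xs (2 * n - 1) .. xs (2 * n)})"
    and g_basis: "\<forall>n\<le>n0. sol_basis h V lam (g n) (cnj_fun (g n))"
    and g_first: "g 0 = Jmout" and g_last: "g n0 = Jpin"
    and g_wronsk: "\<forall>n\<le>n0. \<forall>x. wronskian (g n) (cnj_fun (g n)) x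
                                 = wronskian (g 0) (cnj_fun (g 0)) x"
    and g_indep: "\<forall>n\<in>{1..n0}. lin_indep2 (g (n - 1)) (cnj_fun (g n))"
    and T_def: "\<forall>n\<in>{1..n0}. transfer_rel (g (n - 1)) (g n) (T n)"
    and Pmin: "qw_fixed n0 (\<lambda>n. coinM (T n)) Pmin" "cells Pmin 1 $ 2 = 1" "mInf Pmin = 0"
    and Pmout: "qw_fixed n0 (\<lambda>n. coinM (T n)) Pmout" "cells Pmout 1 $ 2 = 0" "mInf Pmout = 1"
    and Ppin: "qw_fixed n0 (\<lambda>n. coinM (T n)) Ppin" "cells Ppin n0 $ 1 = 1" "pInf Ppin = 0"
    and Ppout: "qw_fixed n0 (\<lambda>n. coinM (T n)) Ppout" "cells Ppout n0 $ 1 = 0" "pInf Ppout = 1"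
  shows "scat_QM Jpin Jmin Jmout Jpout = scat_QW n0 Ppin Pmin Pmout Ppout"
  proof -
  define s where "s = sqrt lam / h"
  have spos: "s > 0" using lam_range h_pos by (simp add: s_def)
  have sx: "\<And>x. sqrt lam * \<bar>x\<bar> / h = s * \<bar>x\<bar>" by (simp add: s_def)
  define Ein where "Ein = (\<lambda>x::real. exp (\<i> * complex_of_real (s * \<bar>x\<bar>)))"
  define Eout where "Eout = (\<lambda>x::real. exp (- \<i> * complex_of_real (s * \<bar>x\<bar>)))"
  have cEin: "\<And>x. cnj (Ein x) = Eout x" by (simp add: Ein_def Eout_def exp_cnj)
  have cEout: "\<And>x. cnj (Eout x) = Ein x" by (simp add: Ein_def Eout_def exp_cnj)
  have Ein1: "\<And>x. Ein x * cnj (Ein x) = 1"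
    unfolding cEin unfolding Ein_def Eout_def by (simp add: exp_add[symmetric])
  have Eout1: "\<And>x. Eout x * cnj (Eout x) = 1"
    unfolding cEout unfolding Ein_def Eout_def by (simp add: exp_add[symmetric])
  have sqEin: "\<And>x. cnj (Ein x) ^ 2 = exp (\<i> * complex_of_real ((-2 * s) * \<bar>x\<bar>))"
    unfolding cEin unfolding Eout_def by (simp add: power2_eq_square exp_add[symmetric] algebra_simps)
  have sqEout: "\<And>x. cnj (Eout x) ^ 2 = exp (\<i> * complex_of_real ((2 * s) * \<bar>x\<bar>))"
    unfolding cEout unfolding Ein_def by (simp add: power2_eq_square exp_add[symmetric] algebra_simps)
  have NCin: "\<And>L. \<not> ((\<lambda>x. cnj (Ein x) ^ 2) \<longlongrightarrow> L) at_top"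
    unfolding sqEin by (rule nonconv_top) (use spos in simp)
  have NCout: "\<And>L. \<not> ((\<lambda>x. cnj (Eout x) ^ 2) \<longlongrightarrow> L) at_bot"
    unfolding sqEout by (rule nonconv_bot) (use spos in simp)
  have jip: "((\<lambda>x. Ein x * Jpin x) \<longlongrightarrow> 1) at_top"
    using J_pin(2) unfolding jost_in_plus_def Ein_def sx .
  have jop: "((\<lambda>x. cnj (Ein x) * Jpout x) \<longlongrightarrow> 1) at_top"
    using J_pout(2) unfolding jost_out_plus_def cEin Eout_def sx .
  have jom: "((\<lambda>x. Eout x * Jmout x) \<longlongrightarrow> 1) at_bot"
    using J_mout(2) unfolding jost_out_minus_def Eout_def sx .
  have jim: "((\<lambda>x. cnj (Eout x) * Jmin x) \<longlongrightarrow> 1) at_bot"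
    using J_min(2) unfolding jost_in_minus_def cEout Ein_def sx .
  have gb: "\<And>n. n \<le> n0 \<Longrightarrow> sol_basis h V lam (g n) (cnj_fun (g n))" using g_basis by auto
  have gsol: "\<And>n. n \<le> n0 \<Longrightarrow> is_sol h V lam (g n)" using gb unfolding sol_basis_def by blast
  have gind: "\<And>n a b. n \<le> n0 \<Longrightarrow> (\<forall>x. a * g n x + b * cnj (g n x) = 0) \<Longrightarrow> a = 0 \<and> b = 0"
    using basis_indep[OF gb] unfolding cnj_fun_def by blast
  have Jpout_eq: "\<And>x. Jpout x = cnj (Jpin x)"
  proof -
    obtain a b where ab: "\<And>x. Jpout x = a * Jpin x + b * cnj_fun Jpin x"
      using basis_repr[OF gb[of n0, unfolded g_last] J_pout(1)] by auto
    have "a = 0 \<and> b = 1"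
      by (rule asym_basis[OF _ jip jop _ Ein1 NCin]) (auto simp: ab cnj_fun_def)
    then show "\<And>x. Jpout x = cnj (Jpin x)" using ab by (simp add: cnj_fun_def)
  qed
  have Jmin_eq: "\<And>x. Jmin x = cnj (Jmout x)"
  proof -
    obtain a b where ab: "\<And>x. Jmin x = a * Jmout x + b * cnj_fun Jmout x"
      using basis_repr[OF gb[of 0, unfolded g_first] J_min(1)] by auto
    have "a = 0 \<and> b = 1"
      by (rule asym_basis[OF _ jom jim _ Eout1 NCout]) (auto simp: ab cnj_fun_def)
    then show "\<And>x. Jmin x = cnj (Jmout x)" using ab by (simp add: cnj_fun_def)
  qed
  have dg: "\<And>n. n \<le> n0 \<Longrightarrow> \<exists>d. \<forall>x. (g n has_vector_derivative d x) (at x)"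
    using gsol unfolding is_sol_def by blast
  obtain d0 where d0: "\<And>x. (Jmout has_vector_derivative d0 x) (at x)"
    using dg[of 0] g_first by auto
  obtain x0 where x0: "Jmout x0 * cnj (d0 x0) - d0 x0 * cnj (Jmout x0) \<noteq> 0"
    using wronsk_nonzero[OF d0 jom Eout1 NCout] by blast
  have W0: "wronskian (g 0) (cnj_fun (g 0)) x0 \<noteq> 0"
  proof -
    have D: "(cnj_fun Jmout has_vector_derivative cnj (d0 x0)) (at x0)"
      unfolding cnj_fun_def by (rule has_vector_derivative_cnj[OF d0])
    have e: "cnj_fun Jmout x0 = cnj (Jmout x0)" by (simp add: cnj_fun_def)
    show ?thesis using x0 unfolding g_first wronskian_def vector_derivative_at[OF d0] vector_derivative_at[OF D] e
      by simp
  qed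
  define p where "p = (\<lambda>n. T n $ 1 $ 1)"
  define q where "q = (\<lambda>n. T n $ 2 $ 1)"
  have struct: "T n $ 1 $ 2 = cnj (q n) \<and> T n $ 2 $ 2 = cnj (p n)" if n: "n \<in> {1..n0}" for n
  proof -
    have tr: "\<And>x. g n x = g (n - 1) x * T n$1$1 + cnj (g (n - 1) x) * T n$2$1"
             "\<And>x. cnj (g n x) = g (n - 1) x * T n$1$2 + cnj (g (n - 1) x) * T n$2$2"
      using T_def n unfolding transfer_rel_def by blast+
    have "\<forall>x. (T n$1$2 - cnj (T n$2$1)) * g (n - 1) x + (T n$2$2 - cnj (T n$1$1)) * cnj (g (n - 1) x) = 0"
    proof
      fix x
      have "cnj (g n x) = cnj (g (n - 1) x) * cnj (T n$1$1) + g (n - 1) x * cnj (T n$2$1)"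
        using arg_cong[OF tr(1)[of x], of cnj] by simp
      then show "(T n$1$2 - cnj (T n$2$1)) * g (n - 1) x + (T n$2$2 - cnj (T n$1$1)) * cnj (g (n - 1) x) = 0"
        using tr(2)[of x] by (simp add: algebra_simps)
    qed
    moreover have "n - 1 \<le> n0" using n by auto
    ultimately have "T n$1$2 - cnj (T n$2$1) = 0 \<and> T n$2$2 - cnj (T n$1$1) = 0"
      using gind by blast
    then show ?thesis by (simp add: p_def q_def)
  qed
  have det: "\<forall>n\<in>{1..n0}. p n * cnj (p n) - q n * cnj (q n) = 1"
  proof
    fix n assume n: "n \<in> {1..n0}"
    have G: "g n = (\<lambda>y. g (n - 1) y * p n + cnj (g (n - 1) y) * q n)"
      unfolding fun_eq_iff using T_def n unfolding transfer_rel_def p_def q_def by blast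
    have nm: "n - 1 \<le> n0" using n by auto
    obtain d where d: "\<forall>x. (g (n - 1) has_vector_derivative d x) (at x)" using dg[OF nm] by blast
    have "wronskian (g n) (cnj_fun (g n)) x0 = (p n * cnj (p n) - q n * cnj (q n)) * wronskian (g (n - 1)) (cnj_fun (g (n - 1))) x0"
      by (rule wr_transfer[OF d[rule_format] G])
    moreover have nle: "n \<le> n0" using n by simp
    have "wronskian (g n) (cnj_fun (g n)) x0 = wronskian (g 0) (cnj_fun (g 0)) x0"
      using g_wronsk nle by blast
    moreover have "wronskian (g (n - 1)) (cnj_fun (g (n - 1))) x0 = wronskian (g 0) (cnj_fun (g 0)) x0"
      using g_wronsk nm by blast
    ultimately have "(p n * cnj (p n) - q n * cnj (q n)) * wronskian (g 0) (cnj_fun (g 0)) x0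
        = 1 * wronskian (g 0) (cnj_fun (g 0)) x0" by (metis mult_1)
    then show "p n * cnj (p n) - q n * cnj (q n) = 1" using W0 by (rule mult_right_cancel[THEN iffD1, rotated])
  qed
  have detT: "\<forall>n\<in>{1..n0}. T n$1$1 * cnj (T n$1$1) - T n$2$1 * cnj (T n$2$1) = 1"
    using det by (simp add: p_def q_def)
  have trf: "\<forall>n\<in>{1..n0}. \<forall>x. g n x = g (n - 1) x * p n + cnj (g (n - 1) x) * q n \<and>
                cnj (g n x) = g (n - 1) x * cnj (q n) + cnj (g (n - 1) x) * cnj (p n)"
  proof (intro ballI allI)
    fix n x assume n: "n \<in> {1..n0}"
    have t: "transfer_rel (g (n - 1)) (g n) (T n)" using T_def n by blast
    have t1: "g n x = g (n - 1) x * T n$1$1 + cnj (g (n - 1) x) * T n$2$1"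
      and t2: "cnj (g n x) = g (n - 1) x * T n$1$2 + cnj (g (n - 1) x) * T n$2$2"
      using t unfolding transfer_rel_def by blast+
    have st: "T n $ 1 $ 2 = cnj (q n)" "T n $ 2 $ 2 = cnj (p n)" using struct[OF n] by blast+
    show "g n x = g (n - 1) x * p n + cnj (g (n - 1) x) * q n \<and>
                cnj (g n x) = g (n - 1) x * cnj (q n) + cnj (g (n - 1) x) * cnj (p n)"
      using t1 t2[unfolded st] unfolding p_def q_def by blast
  qed
  define ca :: "qw_state \<Rightarrow> nat \<Rightarrow> complex" where "ca = (\<lambda>\<Psi> n. if n = 0 then mInf \<Psi> else cells \<Psi> n $ 1)"
  define cb :: "qw_state \<Rightarrow> nat \<Rightarrow> complex" where "cb = (\<lambda>\<Psi> n. if n = n0 then pInf \<Psi> else cells \<Psi> (Suc n) $ 2)"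
  have ch: "\<And>\<Psi>. qw_fixed n0 (\<lambda>n. coinM (T n)) \<Psi> \<Longrightarrow> chainT n0 p q (ca \<Psi>) (cb \<Psi>)"
    unfolding ca_def cb_def p_def q_def using state_chain[OF _ n0_ge detT] by blast
  have n00: "n0 \<noteq> 0" using n0_ge by simp
  define \<alpha>2 where "\<alpha>2 = mInf Ppout"
  define \<beta>2 where "\<beta>2 = cells Ppout 1 $ 2"
  define \<alpha>3 where "\<alpha>3 = mInf Ppin"
  define \<beta>3 where "\<beta>3 = cells Ppin 1 $ 2"
  have B0: "ca Ppout 0 = \<alpha>2" "cb Ppout 0 = \<beta>2" "ca Ppout n0 = 0" "cb Ppout n0 = 1"
    using n00 Ppout by (simp_all add: ca_def cb_def \<alpha>2_def \<beta>2_def)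
  have C0: "ca Ppin 0 = \<alpha>3" "cb Ppin 0 = \<beta>3" "ca Ppin n0 = 1" "cb Ppin n0 = 0"
    using n00 Ppin by (simp_all add: ca_def cb_def \<alpha>3_def \<beta>3_def)
  have A0: "ca Pmout 0 = 1" "cb Pmout 0 = 0"
    using n00 Pmout by (simp_all add: ca_def cb_def)
  have D0: "ca Pmin 0 = 0" "cb Pmin 0 = 1"
    using n00 Pmin by (simp_all add: ca_def cb_def)
  have b2: "\<beta>2 \<noteq> 0"
  proof
    assume "\<beta>2 = 0"
    with chain_inv[OF ch[OF Ppout(1)] det, of n0] B0 have "\<alpha>2 * cnj \<alpha>2 = -1" by simp
    then have "Re (\<alpha>2 * cnj \<alpha>2) = -1" by simp
    then have "(Re \<alpha>2)^2 + (Im \<alpha>2)^2 = -1" by (simp add: power2_eq_square)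
    then show False by (smt (verit) zero_le_power2)
  qed
  have fB: "\<And>x. Jpout x = \<alpha>2 * Jmout x + \<beta>2 * cnj (Jmout x)"
    using chain_fun[OF ch[OF Ppout(1)] trf, of n0] B0 g_first g_last Jpout_eq by simp
  have fC: "\<And>x. Jpin x = \<alpha>3 * Jmout x + \<beta>3 * cnj (Jmout x)"
    using chain_fun[OF ch[OF Ppin(1)] trf, of n0] C0 g_first g_last by simp
  have indep0: "\<And>a b. (\<forall>x. a * Jmout x + b * cnj (Jmout x) = 0) \<Longrightarrow> a = 0 \<and> b = 0"
  proof -
    fix a b assume h: "\<forall>x. a * Jmout x + b * cnj (Jmout x) = 0"
    show "a = 0 \<and> b = 0" using gind[of 0 a b] h unfolding g_first by blast
  qed
  define eqs where "eqs = (\<lambda>S'::complex^2^2. \<beta>2 * S'$2$1 = \<beta>3 \<and> S'$1$1 + \<alpha>2 * S'$2$1 = \<alpha>3 \<and>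
      \<beta>2 * S'$2$2 = 1 \<and> S'$1$2 + \<alpha>2 * S'$2$2 = 0)"
  define S :: "complex^2^2" where "S = (\<chi> i j. if i = 1 \<and> j = 1 then \<alpha>3 - \<beta>3 * \<alpha>2 / \<beta>2
      else if i = 1 \<and> j = 2 then - \<alpha>2 / \<beta>2 else if i = 2 \<and> j = 1 then \<beta>3 / \<beta>2 else 1 / \<beta>2)"
  have S: "S$1$1 = \<alpha>3 - \<beta>3 * \<alpha>2 / \<beta>2" "S$1$2 = - \<alpha>2 / \<beta>2" "S$2$1 = \<beta>3 / \<beta>2" "S$2$2 = 1 / \<beta>2"
    by (simp_all add: S_def)
  have eqs_uniq: "\<And>S'. eqs S' \<Longrightarrow> S' = S"
  proof -
    fix S' assume e: "eqs S'"
    have e1: "\<beta>2 * S'$2$1 = \<beta>3" "S'$1$1 + \<alpha>2 * S'$2$1 = \<alpha>3" "\<beta>2 * S'$2$2 = 1"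
      "S'$1$2 + \<alpha>2 * S'$2$2 = 0" using e unfolding eqs_def by blast+
    have r1: "S'$2$1 = \<beta>3 / \<beta>2" using e1(1) b2 by (simp add: eq_divide_eq mult.commute)
    have r2: "S'$2$2 = 1 / \<beta>2" using e1(3) b2 by (simp add: eq_divide_eq mult.commute)
    have r3: "S'$1$1 = \<alpha>3 - \<beta>3 * \<alpha>2 / \<beta>2" using e1(2) r1 by (simp add: algebra_simps)
    have r4: "S'$1$2 = - \<alpha>2 / \<beta>2" using e1(4) r2 by (simp add: algebra_simps add_eq_0_iff)
    show "S' = S" unfolding vec_eq_iff forall_2 using S r1 r2 r3 r4 by simp
  qed
  have QM: "scat_QM Jpin Jmin Jmout Jpout = S"
    unfolding scat_QM_def
  proof (rule the_equality)
    show "\<forall>x. Jpin x = Jmout x * S$1$1 + Jpout x * S$2$1 \<and> Jmin x = Jmout x * S$1$2 + Jpout x * S$2$2"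
      using b2 by (simp add: S fB fC Jmin_eq field_simps)
  next
    fix S' :: "complex^2^2"
    assume h: "\<forall>x. Jpin x = Jmout x * S'$1$1 + Jpout x * S'$2$1 \<and> Jmin x = Jmout x * S'$1$2 + Jpout x * S'$2$2"
    have "\<forall>x. (\<alpha>3 - S'$1$1 - \<alpha>2 * S'$2$1) * Jmout x + (\<beta>3 - \<beta>2 * S'$2$1) * cnj (Jmout x) = 0"
    proof
      fix x from h[rule_format, of x] show "(\<alpha>3 - S'$1$1 - \<alpha>2 * S'$2$1) * Jmout x + (\<beta>3 - \<beta>2 * S'$2$1) * cnj (Jmout x) = 0"
        by (simp add: fB fC algebra_simps)
    qed
    from indep0[OF this] have z1: "\<alpha>3 - S'$1$1 - \<alpha>2 * S'$2$1 = 0" "\<beta>3 - \<beta>2 * S'$2$1 = 0" by blast+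
    have e1: "\<beta>2 * S'$2$1 = \<beta>3" "S'$1$1 + \<alpha>2 * S'$2$1 = \<alpha>3"
      using z1 by algebra+
    have "\<forall>x. (- S'$1$2 - \<alpha>2 * S'$2$2) * Jmout x + (1 - \<beta>2 * S'$2$2) * cnj (Jmout x) = 0"
    proof
      fix x from h[rule_format, of x] show "(- S'$1$2 - \<alpha>2 * S'$2$2) * Jmout x + (1 - \<beta>2 * S'$2$2) * cnj (Jmout x) = 0"
        by (simp add: fB Jmin_eq algebra_simps)
    qed
    from indep0[OF this] have z2: "- S'$1$2 - \<alpha>2 * S'$2$2 = 0" "1 - \<beta>2 * S'$2$2 = 0" by blast+
    have e2: "\<beta>2 * S'$2$2 = 1" "S'$1$2 + \<alpha>2 * S'$2$2 = 0"
      using z2 by algebra+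
    show "S' = S" using eqs_uniq e1 e2 unfolding eqs_def by blast
  qed
  have zero_comb: "\<And>\<Psi>1 \<Psi>2 \<Psi>3 x y n. qw_fixed n0 (\<lambda>n. coinM (T n)) \<Psi>1 \<Longrightarrow> qw_fixed n0 (\<lambda>n. coinM (T n)) \<Psi>2
      \<Longrightarrow> qw_fixed n0 (\<lambda>n. coinM (T n)) \<Psi>3
      \<Longrightarrow> ca \<Psi>1 0 - x * ca \<Psi>2 0 - y * ca \<Psi>3 0 = 0 \<Longrightarrow> cb \<Psi>1 0 - x * cb \<Psi>2 0 - y * cb \<Psi>3 0 = 0
      \<Longrightarrow> n \<le> n0 \<Longrightarrow> ca \<Psi>1 n = x * ca \<Psi>2 n + y * ca \<Psi>3 n \<and> cb \<Psi>1 n = x * cb \<Psi>2 n + y * cb \<Psi>3 n"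
  proof -
    fix \<Psi>1 \<Psi>2 \<Psi>3 x y n
    assume f: "qw_fixed n0 (\<lambda>n. coinM (T n)) \<Psi>1" "qw_fixed n0 (\<lambda>n. coinM (T n)) \<Psi>2"
      "qw_fixed n0 (\<lambda>n. coinM (T n)) \<Psi>3"
      and z: "ca \<Psi>1 0 - x * ca \<Psi>2 0 - y * ca \<Psi>3 0 = 0" "cb \<Psi>1 0 - x * cb \<Psi>2 0 - y * cb \<Psi>3 0 = 0"
      and n: "n \<le> n0"
    have "ca \<Psi>1 n - x * ca \<Psi>2 n - y * ca \<Psi>3 n = 0 \<and> cb \<Psi>1 n - x * cb \<Psi>2 n - y * cb \<Psi>3 n = 0"
      using chain_zero[OF chain_lin[OF ch[OF f(1)] ch[OF f(2)] ch[OF f(3)]] det, of x y] z n by simp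
    then show "ca \<Psi>1 n = x * ca \<Psi>2 n + y * ca \<Psi>3 n \<and> cb \<Psi>1 n = x * cb \<Psi>2 n + y * cb \<Psi>3 n"
      by (simp add: algebra_simps)
  qed
  have cells_comb: "\<And>\<Psi>1 \<Psi>2 \<Psi>3 x y. (\<And>n. n \<le> n0 \<Longrightarrow> ca \<Psi>1 n = x * ca \<Psi>2 n + y * ca \<Psi>3 n \<and> cb \<Psi>1 n = x * cb \<Psi>2 n + y * cb \<Psi>3 n)
      \<Longrightarrow> (\<forall>n\<in>{1..n0}. cells \<Psi>1 n = x *s cells \<Psi>2 n + y *s cells \<Psi>3 n) \<and>
          mInf \<Psi>1 = x * mInf \<Psi>2 + y * mInf \<Psi>3 \<and> pInf \<Psi>1 = x * pInf \<Psi>2 + y * pInf \<Psi>3"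
  proof -
    fix \<Psi>1 \<Psi>2 \<Psi>3 x y
    assume H: "\<And>n. n \<le> n0 \<Longrightarrow> ca \<Psi>1 n = x * ca \<Psi>2 n + y * ca \<Psi>3 n \<and> cb \<Psi>1 n = x * cb \<Psi>2 n + y * cb \<Psi>3 n"
    have "cells \<Psi>1 n = x *s cells \<Psi>2 n + y *s cells \<Psi>3 n" if n: "n \<in> {1..n0}" for n
    proof -
      have nn: "n \<noteq> 0" "n - 1 \<noteq> n0" "Suc (n - 1) = n" "n \<le> n0" "n - 1 \<le> n0" using n by auto
      have "cells \<Psi>1 n $ 1 = x * cells \<Psi>2 n $ 1 + y * cells \<Psi>3 n $ 1"
        using H[OF nn(4)] nn by (simp add: ca_def)
      moreover have "cells \<Psi>1 n $ 2 = x * cells \<Psi>2 n $ 2 + y * cells \<Psi>3 n $ 2"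
        using H[OF nn(5)] nn by (simp add: cb_def)
      ultimately show ?thesis unfolding vec_eq_iff forall_2 by simp
    qed
    moreover have "mInf \<Psi>1 = x * mInf \<Psi>2 + y * mInf \<Psi>3" using H[of 0] by (simp add: ca_def)
    moreover have "pInf \<Psi>1 = x * pInf \<Psi>2 + y * pInf \<Psi>3" using H[of n0] by (simp add: cb_def)
    ultimately show "(\<forall>n\<in>{1..n0}. cells \<Psi>1 n = x *s cells \<Psi>2 n + y *s cells \<Psi>3 n) \<and>
          mInf \<Psi>1 = x * mInf \<Psi>2 + y * mInf \<Psi>3 \<and> pInf \<Psi>1 = x * pInf \<Psi>2 + y * pInf \<Psi>3" by blast
  qed
  have QW: "scat_QW n0 Ppin Pmin Pmout Ppout = S"
    unfolding scat_QW_def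
  proof (rule the_equality)
    have c1: "\<And>n. n \<le> n0 \<Longrightarrow> ca Ppin n = S$1$1 * ca Pmout n + S$2$1 * ca Ppout n \<and> cb Ppin n = S$1$1 * cb Pmout n + S$2$1 * cb Ppout n"
      by (rule zero_comb[OF Ppin(1) Pmout(1) Ppout(1)]) (use b2 in \<open>simp_all add: A0 B0 C0 S field_simps\<close>)
    have c2: "\<And>n. n \<le> n0 \<Longrightarrow> ca Pmin n = S$1$2 * ca Pmout n + S$2$2 * ca Ppout n \<and> cb Pmin n = S$1$2 * cb Pmout n + S$2$2 * cb Ppout n"
      by (rule zero_comb[OF Pmin(1) Pmout(1) Ppout(1)]) (use b2 in \<open>simp_all add: A0 B0 D0 S field_simps\<close>)
    show "(\<forall>n\<in>{1..n0}.
        cells Ppin n = S$1$1 *s cells Pmout n + S$2$1 *s cells Ppout n \<and>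
        cells Pmin n = S$1$2 *s cells Pmout n + S$2$2 *s cells Ppout n) \<and>
     mInf Ppin = S$1$1 * mInf Pmout + S$2$1 * mInf Ppout \<and>
     mInf Pmin = S$1$2 * mInf Pmout + S$2$2 * mInf Ppout \<and>
     pInf Ppin = S$1$1 * pInf Pmout + S$2$1 * pInf Ppout \<and>
     pInf Pmin = S$1$2 * pInf Pmout + S$2$2 * pInf Ppout"
      using cells_comb[OF c1] cells_comb[OF c2] by blast
  next
    fix S' :: "complex^2^2"
    assume h: "(\<forall>n\<in>{1..n0}.
        cells Ppin n = S'$1$1 *s cells Pmout n + S'$2$1 *s cells Ppout n \<and>
        cells Pmin n = S'$1$2 *s cells Pmout n + S'$2$2 *s cells Ppout n) \<and>
     mInf Ppin = S'$1$1 * mInf Pmout + S'$2$1 * mInf Ppout \<and>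
     mInf Pmin = S'$1$2 * mInf Pmout + S'$2$2 * mInf Ppout \<and>
     pInf Ppin = S'$1$1 * pInf Pmout + S'$2$1 * pInf Ppout \<and>
     pInf Pmin = S'$1$2 * pInf Pmout + S'$2$2 * pInf Ppout"
    have one: "(1::nat) \<in> {1..n0}" using n0_ge by simp
    have "cells Ppin 1 $ 2 = S'$1$1 * cells Pmout 1 $ 2 + S'$2$1 * cells Ppout 1 $ 2"
         "cells Pmin 1 $ 2 = S'$1$2 * cells Pmout 1 $ 2 + S'$2$2 * cells Ppout 1 $ 2"
      using h one by auto
    then have q1: "\<beta>3 = S'$2$1 * \<beta>2" and q2: "1 = S'$2$2 * \<beta>2"
      using Pmout(2) Pmin(2) by (simp_all add: \<beta>2_def \<beta>3_def)
    have q3: "\<alpha>3 = S'$1$1 + S'$2$1 * \<alpha>2" and q4: "0 = S'$1$2 + S'$2$2 * \<alpha>2"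
      using h Pmout(3) Pmin(3) by (simp_all add: \<alpha>2_def \<alpha>3_def)
    have "eqs S'" unfolding eqs_def using q1 q2 q3 q4 by (simp add: mult.commute)
    then show "S' = S" by (rule eqs_uniq)
  qed
  show ?thesis using QM QW by simp
qed

end
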